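(* Let $p\ge5$ be a prime, let $\lambda,k\in\mathbb{N}$, and let $\zeta_k$ be a $k$th root of unity. Then for all integers $r$ and $m$ with $m\ge\lambda$, the power series $(1-(\zeta_k-q)^{krp})^m\in\mathbb{Z}[\zeta_k][[q]]$ satisfies $$(1-(\zeta_k-q)^{krp})^m\equiv O\!\left(q^{\lambda-1+p(m-\lambda-1)}\right)\pmod{p^\lambda},$$ i.e. every coefficient of $q^i$ with $i<\lambda-1+p(m-\lambda-1)$ lies in $p^\lambda\mathbb{Z}[\zeta_k]$.
   Context: $(\zeta_k-q)^{krp}$ for negative exponent is expanded as a power series in $q$ with coefficients in $\mathbb{Z}[\zeta_k]$. *)

theory Defs
  imports "HOL-Computational_Algebra.Computational_Algebra"
begin

definition int_adjoin :: "complex \<Rightarrow> complex set" where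
  "int_adjoin z = {x. \<exists>P :: int poly. x = poly (map_poly of_int P) z}"

end

theory Submission
  imports Defs
begin


lemma mp_add: "map_poly (of_int :: int \<Rightarrow> complex) (p + q) = map_poly of_int p + map_poly of_int q"
  by (simp add: poly_eq_iff coeff_map_poly)
lemma mp_mult: "map_poly (of_int :: int \<Rightarrow> complex) (p * q) = map_poly of_int p * map_poly of_int q"
  by (simp add: poly_eq_iff coeff_map_poly coeff_mult)
lemma mp_uminus: "map_poly (of_int :: int \<Rightarrow> complex) (- p) = - map_poly of_int p"
  by (simp add: poly_eq_iff coeff_map_poly)

lemma R_add: "x \<in> int_adjoin z \<Longrightarrow> y \<in> int_adjoin z \<Longrightarrow> x + y \<in> int_adjoin z"
  unfolding int_adjoin_def by (auto simp flip: poly_add mp_add) 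
lemma R_mult: "x \<in> int_adjoin z \<Longrightarrow> y \<in> int_adjoin z \<Longrightarrow> x * y \<in> int_adjoin z"
  unfolding int_adjoin_def by (auto simp flip: poly_mult mp_mult) 
lemma R_uminus: "x \<in> int_adjoin z \<Longrightarrow> - x \<in> int_adjoin z"
  unfolding int_adjoin_def by (auto simp flip: poly_minus mp_uminus) 
lemma R_diff: "x \<in> int_adjoin z \<Longrightarrow> y \<in> int_adjoin z \<Longrightarrow> x - y \<in> int_adjoin z"
  using R_add[of x z "-y"] R_uminus[of y z] by simp
lemma R_of_int: "of_int c \<in> int_adjoin z"
  unfolding int_adjoin_def by (rule CollectI, rule exI[of _ "[:c:]"]) (simp add: map_poly_pCons)
lemma R_0: "0 \<in> int_adjoin z" using R_of_int[of 0 z] by simp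
lemma R_1: "1 \<in> int_adjoin z" using R_of_int[of 1 z] by simp
lemma R_of_nat: "of_nat c \<in> int_adjoin z" using R_of_int[of "int c" z] by simp
lemma R_z: "z \<in> int_adjoin z"
  unfolding int_adjoin_def by (rule CollectI, rule exI[of _ "[:0,1:]"]) (simp add: map_poly_pCons)
lemma R_pow: "x \<in> int_adjoin z \<Longrightarrow> x ^ n \<in> int_adjoin z"
  by (induction n) (auto intro: R_mult R_1)
lemma R_sum: "finite A \<Longrightarrow> (\<And>i. i \<in> A \<Longrightarrow> f i \<in> int_adjoin z) \<Longrightarrow> sum f A \<in> int_adjoin z"
  by (induction A rule: finite_induct) (auto intro: R_add R_0)

definition good :: "complex \<Rightarrow> complex fps \<Rightarrow> bool" where
  "good z f \<longleftrightarrow> (\<forall>i. fps_nth f i \<in> int_adjoin z)"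

lemma good_add: "good z f \<Longrightarrow> good z g \<Longrightarrow> good z (f + g)"
  by (simp add: good_def R_add)
lemma good_diff: "good z f \<Longrightarrow> good z g \<Longrightarrow> good z (f - g)"
  by (simp add: good_def R_diff)
lemma good_uminus: "good z f \<Longrightarrow> good z (- f)"
  by (simp add: good_def R_uminus)
lemma good_mult: "good z f \<Longrightarrow> good z g \<Longrightarrow> good z (f * g)"
  by (auto simp: good_def fps_mult_nth intro!: R_sum R_mult)
lemma good_const: "c \<in> int_adjoin z \<Longrightarrow> good z (fps_const c)"
  by (simp add: good_def R_0)
lemma good_1: "good z 1" by (simp add: good_def R_0 R_1)
lemma good_0: "good z 0" by (simp add: good_def R_0)
lemma good_X: "good z fps_X" by (simp add: good_def fps_X_def R_0 R_1)
lemma good_pow: "good z f \<Longrightarrow> good z (f ^ n)"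
  by (induction n) (auto intro: good_mult good_1)
lemma good_sum: "finite A \<Longrightarrow> (\<And>i. i \<in> A \<Longrightarrow> good z (f i)) \<Longrightarrow> good z (sum f A)"
  by (induction A rule: finite_induct) (auto intro: good_add good_0)


lemma step1:
  fixes k :: nat and z :: complex and r :: int and p :: nat
  assumes "k > 0" "z ^ k = 1" "p > 0"
  obtains v where "good z v" "v $ 0 = 1"
    "(fps_const z - fps_X) powi (int k * r * int p) = v ^ p"
proof -
  define w where "w = z ^ (k - 1)"
  have zw: "z * w = 1" using assms unfolding w_def
    by (cases k) simp_all
  have wz: "w * z = 1" using zw by (simp add: mult.commute)
  have "w ^ k = (z ^ k) ^ (k - 1)" unfolding w_def by (simp flip: power_mult add: mult.commute)
  then have wk: "w ^ k = 1" using assms by simp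
  define Y where "Y = Abs_fps (\<lambda>i. w ^ (i+1))"
  have cY: "(fps_const z - fps_X) * Y = 1"
  proof (rule fps_ext)
    fix n
    show "((fps_const z - fps_X) * Y) $ n = 1 $ n"
    proof (cases n)
      case 0 then show ?thesis by (simp add: Y_def algebra_simps zw wz)
    next
      case (Suc m)
      have "z * w ^ (Suc m + 1) = (z * w) * w ^ (m+1)" by simp
      then have "z * w ^ (Suc m + 1) = w ^ (m+1)" using zw by simp
      then show ?thesis using Suc by (simp add: Y_def algebra_simps)
    qed
  qed
  have invY: "inverse (fps_const z - fps_X) = Y" by (rule fps_inverse_unique[OF cY])
  have gY: "good z Y" by (auto simp: good_def Y_def simp del: power_Suc intro!: R_pow R_z R_mult R_1 simp: w_def)
  have gc: "good z (fps_const z - fps_X)" by (intro good_diff good_const good_X R_z)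
  define v where "v = (fps_const z - fps_X) powi (int k * r)"
  have "good z v \<and> v $ 0 = 1 \<and> (fps_const z - fps_X) powi (int k * r * int p) = v ^ p"
  proof (cases "int k * r \<ge> 0")
    case True
    then have r0: "r \<ge> 0" using assms by (simp add: zero_le_mult_iff)
    have "v = (fps_const z - fps_X) ^ (k * nat r)" using True r0 unfolding v_def power_int_def
      by (simp add: nat_mult_distrib)
    moreover have "(fps_const z - fps_X) powi (int k * r * int p) = (fps_const z - fps_X) ^ (k * nat r * p)"
      using True r0 unfolding power_int_def by (simp add: nat_mult_distrib)
    ultimately show ?thesis using gc
      by (simp add: good_pow fps_power_zeroth power_mult assms)
  next
    case False
    then have r0: "r < 0" using assms by (simp add: zero_le_mult_iff)
    have "-(int k * r) = int (k * nat (-r))" using r0 by simp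
    then have e1: "nat (-(int k * r)) = k * nat (-r)" by linarith
    have "-(int k * r * int p) = int (k * nat (-r) * p)" using r0 by simp
    then have e2: "nat (-(int k * r * int p)) = k * nat (-r) * p" by linarith
    have lt: "int k * r * int p < 0" using r0 assms by (simp add: mult_less_0_iff)
    have "v = Y ^ (k * nat (-r))" using False r0 unfolding v_def power_int_def invY
      by (simp add: e1 flip: fps_inverse_power)
    moreover have "(fps_const z - fps_X) powi (int k * r * int p) = Y ^ (k * nat (-r) * p)"
      using lt unfolding power_int_def invY
      by (simp add: e2 flip: fps_inverse_power)
    moreover have "Y $ 0 = w" by (simp add: Y_def)
    ultimately show ?thesis using gY
      by (simp add: good_pow fps_power_zeroth power_mult wk)
  qed
  then show ?thesis using that by blast
qed


lemma good_of_nat: "good z (of_nat n)"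
  unfolding fps_of_nat[symmetric] by (intro good_const R_of_nat)

lemma step2:
  assumes "good z v" "v $ 0 = 1"
  obtains t where "good z t" "v = 1 + fps_X * t"
proof -
  define t where "t = Abs_fps (\<lambda>i. v $ (i+1))"
  have "v = 1 + fps_X * t"
    by (rule fps_ext) (auto simp: t_def assms(2))
  moreover have "good z t" using assms(1) by (simp add: good_def t_def)
  ultimately show ?thesis using that by blast
qed

lemma step3:
  fixes p :: nat
  assumes "prime p" "good z t"
  obtains S where "good z S"
    "1 - (1 + fps_X * t) ^ p = - (fps_X ^ p * t ^ p + fps_const (of_nat p) * (fps_X * S))"
proof -
  have p0: "p > 0" using assms prime_gt_0_nat by blast
  define y where "y = fps_X * t"
  define S where "S = (\<Sum>i<p-1. of_nat ((p choose (i+1)) div p) * fps_X ^ i * t ^ (i+1))"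
  have "(1 + y) ^ p = (y + 1) ^ p" by (simp add: add.commute)
  also have "\<dots> = (\<Sum>i\<le>p. of_nat (p choose i) * y ^ i)"
    by (simp add: binomial_ring)
  also have "\<dots> = (\<Sum>i<Suc p. of_nat (p choose i) * y ^ i)"
    by (simp add: lessThan_Suc_atMost)
  also have "\<dots> = (\<Sum>i<p. of_nat (p choose i) * y ^ i) + y ^ p"
    by simp
  also have "(\<Sum>i<p. of_nat (p choose i) * y ^ i) = 1 + (\<Sum>i<p-1. of_nat (p choose (i+1)) * y ^ (i+1))"
  proof -
    have "(\<Sum>i<Suc (p-1). of_nat (p choose i) * y ^ i) = of_nat (p choose 0) * y ^ 0 + (\<Sum>i<p-1. of_nat (p choose Suc i) * y ^ Suc i)"
      by (rule sum.lessThan_Suc_shift)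
    then show ?thesis using p0 by simp
  qed
  also have "(\<Sum>i<p-1. of_nat (p choose (i+1)) * y ^ (i+1)) = fps_const (of_nat p) * (fps_X * S)"
    unfolding S_def sum_distrib_left
  proof (rule sum.cong)
    fix i assume "i \<in> {..<p-1}"
    then have "p dvd (p choose (i+1))" using assms(1) by (intro dvd_choose_prime) auto
    then have c: "p choose (i+1) = p * ((p choose (i+1)) div p)" by simp
    have "(of_nat (p choose (i+1)) :: complex fps) = fps_const (of_nat p) * of_nat ((p choose (i+1)) div p)"
      by (subst c) (simp add: fps_of_nat fps_const_mult)
    then show "of_nat (p choose (i+1)) * y ^ (i+1) = fps_const (of_nat p) * (fps_X * (of_nat ((p choose (i+1)) div p) * fps_X ^ i * t ^ (i+1)))"
      by (simp add: y_def power_mult_distrib algebra_simps)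
  qed simp
  finally have "1 - (1 + y) ^ p = - (y ^ p + fps_const (of_nat p) * (fps_X * S))" by simp
  moreover have "good z S" unfolding S_def
    by (intro good_sum good_mult good_pow good_X assms(2)) (auto intro: good_of_nat)
  ultimately show ?thesis using that unfolding y_def by (simp add: power_mult_distrib)
qed


definition Qp :: "complex \<Rightarrow> complex \<Rightarrow> nat \<Rightarrow> complex fps \<Rightarrow> bool" where
  "Qp z c N f \<longleftrightarrow> (\<exists>gA gB. good z gA \<and> good z gB \<and> f = fps_const c * gA + fps_X ^ N * gB)"

lemma Qp_add: "Qp z c N f \<Longrightarrow> Qp z c N g \<Longrightarrow> Qp z c N (f + g)"
proof -
  assume "Qp z c N f" "Qp z c N g"
  then obtain a1 b1 a2 b2 where "good z a1" "good z b1" "good z a2" "good z b2"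
    "f = fps_const c * a1 + fps_X ^ N * b1" "g = fps_const c * a2 + fps_X ^ N * b2"
    unfolding Qp_def by blast
  moreover have "fps_const c * a1 + fps_X ^ N * b1 + (fps_const c * a2 + fps_X ^ N * b2)
     = fps_const c * (a1 + a2) + fps_X ^ N * (b1 + b2)" by (simp add: distrib_left)
  ultimately show ?thesis unfolding Qp_def by (metis good_add)
qed

lemma Qp_mult: "good z h \<Longrightarrow> Qp z c N f \<Longrightarrow> Qp z c N (h * f)"
proof -
  assume "good z h" "Qp z c N f"
  then obtain a1 b1 where "good z a1" "good z b1"
    "f = fps_const c * a1 + fps_X ^ N * b1"
    unfolding Qp_def by blast
  moreover have "h * (fps_const c * a1 + fps_X ^ N * b1)
     = fps_const c * (h * a1) + fps_X ^ N * (h * b1)" by (simp add: distrib_left mult.left_commute)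
  ultimately show ?thesis unfolding Qp_def using \<open>good z h\<close> by (metis good_mult)
qed

lemma Qp_A: "good z g \<Longrightarrow> Qp z c N (fps_const c * g)"
  unfolding Qp_def by (rule exI[of _ g], rule exI[of _ 0]) (simp add: good_0)
lemma Qp_B: "good z g \<Longrightarrow> Qp z c N (fps_X ^ N * g)"
  unfolding Qp_def by (rule exI[of _ 0], rule exI[of _ g]) (simp add: good_0)

lemma Qp_0: "Qp z c N 0"
  unfolding Qp_def by (auto intro!: exI[of _ 0] good_0)

lemma Qp_sum: "finite A \<Longrightarrow> (\<And>i. i \<in> A \<Longrightarrow> Qp z c N (f i)) \<Longrightarrow> Qp z c N (sum f A)"
  by (induction A rule: finite_induct) (auto intro: Qp_add Qp_0)

lemma step4:
  fixes p lam mm :: nat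
  assumes "good z S" "good z T" "p > 0" "lam \<le> mm"
    and N0: "int N0 \<le> int lam - 1 + int p * (int mm - int lam - 1)"
  shows "Qp z (of_nat p ^ lam) N0 ((- (fps_X ^ p * T + fps_const (of_nat p) * (fps_X * S))) ^ mm)"
proof -
  define P where "P = fps_const (of_nat p) * (fps_X * S)"
  define Q where "Q = fps_X ^ p * T"
  have "(- (fps_X ^ p * T + fps_const (of_nat p) * (fps_X * S))) ^ mm = (-1) ^ mm * (P + Q) ^ mm"
  proof -
    have e0: "fps_X ^ p * T + fps_const (of_nat p) * (fps_X * S) = P + Q"
      by (simp add: P_def Q_def add.commute)
    show ?thesis unfolding e0 by (rule power_minus)
  qed
  also have "(P + Q) ^ mm = (\<Sum>j\<le>mm. of_nat (mm choose j) * P ^ j * Q ^ (mm - j))"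
    by (rule binomial_ring)
  finally have eq: "(- (fps_X ^ p * T + fps_const (of_nat p) * (fps_X * S))) ^ mm
      = (-1) ^ mm * (\<Sum>j\<le>mm. of_nat (mm choose j) * P ^ j * Q ^ (mm - j))" .
  have "Qp z (of_nat p ^ lam) N0 (of_nat (mm choose j) * P ^ j * Q ^ (mm - j))" if j: "j \<le> mm" for j
  proof (cases "lam \<le> j")
    case True
    have "of_nat (mm choose j) * P ^ j * Q ^ (mm - j) =
       fps_const (of_nat p ^ lam) * (of_nat (mm choose j) * fps_const (of_nat p ^ (j - lam)) * (fps_X * S) ^ j * Q ^ (mm - j))"
    proof -
      have "(of_nat p :: complex) ^ j = of_nat p ^ lam * of_nat p ^ (j - lam)"
        using True by (simp flip: power_add)
      then have "fps_const ((of_nat p :: complex) ^ j) = fps_const (of_nat p ^ lam) * fps_const (of_nat p ^ (j - lam))"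
        by simp
      then have Pj: "P ^ j = fps_const (of_nat p ^ lam) * fps_const (of_nat p ^ (j - lam)) * (fps_X * S) ^ j"
        unfolding P_def by (simp only: power_mult_distrib fps_const_power)
      show ?thesis unfolding Pj by (simp only: ac_simps)
    qed
    moreover have "good z (of_nat (mm choose j) * fps_const (of_nat p ^ (j - lam)) * (fps_X * S) ^ j * Q ^ (mm - j))"
      unfolding Q_def
      by (intro good_mult good_pow good_X good_of_nat good_const R_pow R_of_nat assms(1,2))
    ultimately show ?thesis by (metis Qp_A)
  next
    case False
    define e where "e = j + p * (mm - j)"
    have "int N0 \<le> int j + int p * (int mm - int j)" 
    proof -
      have "int p * (int lam + 1 - int j) \<ge> int lam + 1 - int j"
        using False assms(3) by (simp add: mult_le_cancel_right1)
      then show ?thesis using N0 by (simp add: algebra_simps)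
    qed
    moreover have "int (j + p * (mm - j)) = int j + int p * (int mm - int j)" using j by (simp add: of_nat_diff)
    ultimately have Ne: "N0 \<le> e" unfolding e_def by linarith
    have "of_nat (mm choose j) * P ^ j * Q ^ (mm - j) =
       fps_X ^ N0 * (fps_X ^ (e - N0) * (of_nat (mm choose j) * fps_const (of_nat p ^ j) * S ^ j * T ^ (mm - j)))"
    proof -
      have "(fps_X :: complex fps) ^ N0 * fps_X ^ (e - N0) = fps_X ^ j * (fps_X ^ p) ^ (mm - j)"
        using Ne unfolding e_def by (simp flip: power_add power_mult)
      note XX = this
      have Pj: "P ^ j = fps_const ((of_nat p :: complex) ^ j) * (fps_X ^ j * S ^ j)"
        unfolding P_def by (simp only: power_mult_distrib fps_const_power)
      have Qj: "Q ^ (mm - j) = (fps_X ^ p) ^ (mm - j) * T ^ (mm - j)"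
        unfolding Q_def by (simp only: power_mult_distrib)
      have "fps_X ^ N0 * (fps_X ^ (e - N0) * (of_nat (mm choose j) * fps_const (of_nat p ^ j) * S ^ j * T ^ (mm - j)))
          = (fps_X ^ N0 * fps_X ^ (e - N0)) * (of_nat (mm choose j) * fps_const (of_nat p ^ j) * S ^ j * T ^ (mm - j))"
        by (simp only: mult.assoc)
      also have "\<dots> = (fps_X ^ j * (fps_X ^ p) ^ (mm - j)) * (of_nat (mm choose j) * fps_const (of_nat p ^ j) * S ^ j * T ^ (mm - j))"
        unfolding XX ..
      finally show ?thesis unfolding Pj Qj by (simp only: ac_simps)
    qed
    moreover have "good z (fps_X ^ (e - N0) * (of_nat (mm choose j) * fps_const (of_nat p ^ j) * S ^ j * T ^ (mm - j)))"
      by (intro good_mult good_pow good_X good_of_nat good_const R_pow R_of_nat assms(1,2))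
    ultimately show ?thesis by (metis Qp_B)
  qed
  then have "Qp z (of_nat p ^ lam) N0 (\<Sum>j\<le>mm. of_nat (mm choose j) * P ^ j * Q ^ (mm - j))"
    by (intro Qp_sum) auto
  then show ?thesis unfolding eq
    by (intro Qp_mult good_pow good_uminus good_1)
qed


theorem lemma4p9:
  fixes p lam k :: nat and z :: complex and r m :: int
  assumes "prime p" and "p \<ge> 5" and "k > 0" and "z ^ k = 1"
    and "m \<ge> int lam"
  shows "\<forall>i::nat. int i < int lam - 1 + int p * (m - int lam - 1) \<longrightarrow>
           (\<exists>a \<in> int_adjoin z.
              fps_nth ((1 - (fps_const z - fps_X) powi (int k * r * int p)) ^ nat m) i
                = of_nat p ^ lam * a)"
proof (intro allI impI)
  fix i :: nat
  assume i: "int i < int lam - 1 + int p * (m - int lam - 1)"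
  have p0: "p > 0" using assms by simp
  obtain v where v: "good z v" "v $ 0 = 1"
    "(fps_const z - fps_X) powi (int k * r * int p) = v ^ p"
    using step1[OF assms(3,4) p0] by blast
  obtain t where t: "good z t" "v = 1 + fps_X * t" using step2[OF v(1,2)] by blast
  obtain S where S: "good z S"
    "1 - (1 + fps_X * t) ^ p = - (fps_X ^ p * t ^ p + fps_const (of_nat p) * (fps_X * S))"
    using step3[OF assms(1) t(1)] by blast
  define mm where "mm = nat m"
  have m: "m = int mm" unfolding mm_def using assms(5) by simp
  define N0 where "N0 = nat (int lam - 1 + int p * (m - int lam - 1))"
  have N0i: "int N0 = int lam - 1 + int p * (int mm - int lam - 1)"
    unfolding N0_def m using i m by simp
  have iN: "i < N0" using i N0i m by simp
  have lm: "lam \<le> mm" using assms(5) m by simp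
  have "Qp z (of_nat p ^ lam) N0 ((- (fps_X ^ p * t ^ p + fps_const (of_nat p) * (fps_X * S))) ^ mm)"
    by (rule step4[OF S(1) good_pow[OF t(1)] p0 lm]) (simp add: N0i)
  then obtain gA gB where g: "good z gA" "good z gB"
    "(1 - (fps_const z - fps_X) powi (int k * r * int p)) ^ nat m = fps_const (of_nat p ^ lam) * gA + fps_X ^ N0 * gB"
    unfolding Qp_def v(3) t(2) S(2) mm_def by blast
  have "fps_nth ((1 - (fps_const z - fps_X) powi (int k * r * int p)) ^ nat m) i = of_nat p ^ lam * gA $ i"
    unfolding g(3) using iN by (simp add: fps_X_power_mult_nth)
  moreover have "gA $ i \<in> int_adjoin z" using g(1) by (simp add: good_def)
  ultimately show "\<exists>a \<in> int_adjoin z.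
              fps_nth ((1 - (fps_const z - fps_X) powi (int k * r * int p)) ^ nat m) i
                = of_nat p ^ lam * a" by blast
qed

end
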